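(* Let $G=(V,E)$ be a connected (finite, simple) graph and let $\mathcal{F}$ be a maximum induced forest of $G$ with vertex set $F$. Then there exists a vertex set $A\subseteq V\setminus F$ with $|A|\le 2|F|-2$ such that $G[F\cup A]$ is connected.
   Context: A maximum induced forest of $G$ is an induced subgraph $G[F]$ that is a forest and has the maximum possible number of vertices among all induced forests of $G$. *)

theory Defs
  imports Main
begin

definition simple_graph :: "'a set \<Rightarrow> ('a \<Rightarrow> 'a \<Rightarrow> bool) \<Rightarrow> bool" where
  "simple_graph V E \<longleftrightarrow> finite V \<and> (\<forall>u v. E u v \<longrightarrow> u \<in> V \<and> v \<in> V)
     \<and> (\<forall>u v. E u v \<longrightarrow> E v u) \<and> (\<forall>v. \<not> E v v)"

definition induced_edges :: "('a \<Rightarrow> 'a \<Rightarrow> bool) \<Rightarrow> 'a set \<Rightarrow> ('a \<times> 'a) set" where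
  "induced_edges E S = {(u, v). u \<in> S \<and> v \<in> S \<and> E u v}"

definition connected_on :: "('a \<Rightarrow> 'a \<Rightarrow> bool) \<Rightarrow> 'a set \<Rightarrow> bool" where
  "connected_on E S \<longleftrightarrow> S \<noteq> {} \<and> (\<forall>u\<in>S. \<forall>v\<in>S. (u, v) \<in> (induced_edges E S)\<^sup>*)"

definition has_cycle_on :: "('a \<Rightarrow> 'a \<Rightarrow> bool) \<Rightarrow> 'a set \<Rightarrow> bool" where
  "has_cycle_on E S \<longleftrightarrow> (\<exists>xs. length xs \<ge> 3 \<and> distinct xs \<and> set xs \<subseteq> S
      \<and> (\<forall>i < length xs - 1. E (xs ! i) (xs ! Suc i)) \<and> E (last xs) (hd xs))"

definition induced_forest :: "'a set \<Rightarrow> ('a \<Rightarrow> 'a \<Rightarrow> bool) \<Rightarrow> 'a set \<Rightarrow> bool" where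
  "induced_forest V E F \<longleftrightarrow> F \<subseteq> V \<and> \<not> has_cycle_on E F"

definition max_induced_forest :: "'a set \<Rightarrow> ('a \<Rightarrow> 'a \<Rightarrow> bool) \<Rightarrow> 'a set \<Rightarrow> bool" where
  "max_induced_forest V E F \<longleftrightarrow> induced_forest V E F
     \<and> (\<forall>F'. induced_forest V E F' \<longrightarrow> card F' \<le> card F)"

end

theory Submission
  imports Defs
begin

lemma conn_insert:
  assumes sym: "\<And>u v. E u v \<Longrightarrow> E v u"
    and c: "connected_on E C" and x: "x \<in> C" and e: "E x y"
  shows "connected_on E (insert y C)"
proof -
  let ?R = "induced_edges E C" and ?R' = "induced_edges E (insert y C)"
  have sub: "?R \<subseteq> ?R'" unfolding induced_edges_def by auto
  have A: "(u, v) \<in> ?R'\<^sup>*" if "u \<in> C" "v \<in> C" for u v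
    using c that rtrancl_mono[OF sub] unfolding connected_on_def by blast
  have xy: "(x, y) \<in> ?R'" and yx: "(y, x) \<in> ?R'"
    using x e sym unfolding induced_edges_def by auto
  show ?thesis unfolding connected_on_def
  proof (intro conjI ballI)
    show "insert y C \<noteq> {}" by simp
  next
    fix u v assume u: "u \<in> insert y C" and v: "v \<in> insert y C"
    show "(u, v) \<in> ?R'\<^sup>*"
    proof (cases "u = y")
      case True
      show ?thesis
      proof (cases "v = y")
        case True then show ?thesis using \<open>u = y\<close> by simp
      next
        case False
        then have "v \<in> C" using v by simp
        then have "(x, v) \<in> ?R'\<^sup>*" using A x by blast
        then show ?thesis using yx \<open>u = y\<close> by (meson converse_rtrancl_into_rtrancl)
      qed
    next
      case False
      then have uC: "u \<in> C" using u by simp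
      show ?thesis
      proof (cases "v = y")
        case True
        have "(u, x) \<in> ?R'\<^sup>*" using A x uC by blast
        then show ?thesis using xy True by (meson rtrancl_into_rtrancl)
      next
        case False
        then show ?thesis using A uC v by simp
      qed
    qed
  qed
qed

lemma leave_set:
  assumes "(a, b) \<in> (induced_edges E V)\<^sup>*" "a \<in> S" "b \<notin> S"
  shows "\<exists>x y. x \<in> S \<and> y \<notin> S \<and> E x y \<and> y \<in> V"
  using assms
proof (induction rule: rtrancl_induct)
  case base
  then show ?case by simp
next
  case (step y z)
  show ?case
  proof (cases "y \<in> S")
    case True
    then show ?thesis using step unfolding induced_edges_def by auto
  next
    case False
    then show ?thesis using step by blast
  qed
qed

lemma no_cycle_small:
  assumes "card S \<le> 1" "finite S"
  shows "\<not> has_cycle_on E S"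
proof
  assume "has_cycle_on E S"
  then obtain xs where "length xs \<ge> 3" "distinct xs" "set xs \<subseteq> S"
    unfolding has_cycle_on_def by blast
  then have "length xs \<le> card S"
    using card_mono[OF assms(2)] distinct_card by metis
  then show False using assms \<open>length xs \<ge> 3\<close> by simp
qed

lemma has_nbr:
  assumes g: "simple_graph V E" and m: "max_induced_forest V E F"
    and x: "x \<in> V" "x \<notin> F"
  shows "\<exists>z\<in>F. E x z"
proof (rule ccontr)
  assume nz: "\<not> (\<exists>z\<in>F. E x z)"
  have fin: "finite V" using g unfolding simple_graph_def by simp
  have FV: "F \<subseteq> V" and nc: "\<not> has_cycle_on E F"
    using m unfolding max_induced_forest_def induced_forest_def by auto
  have finF: "finite F" using FV fin finite_subset by blast
  have "card (insert x F) = card F + 1" using finF x by simp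
  then have "\<not> induced_forest V E (insert x F)"
    using m unfolding max_induced_forest_def by fastforce
  then have "has_cycle_on E (insert x F)"
    using FV x unfolding induced_forest_def by auto
  then obtain xs where l: "length xs \<ge> 3" and d: "distinct xs" and s: "set xs \<subseteq> insert x F"
    and ed: "\<forall>i < length xs - 1. E (xs ! i) (xs ! Suc i)" and el: "E (last xs) (hd xs)"
    unfolding has_cycle_on_def by blast
  show False
  proof (cases "x \<in> set xs")
    case False
    then have "set xs \<subseteq> F" using s by auto
    then have "has_cycle_on E F" unfolding has_cycle_on_def using l d ed el by blast
    then show False using nc by simp
  next
    case True
    then obtain i where i: "i < length xs" "xs ! i = x" by (meson in_set_conv_nth)
    show False
    proof (cases "i < length xs - 1")
      case True
      then have "E x (xs ! Suc i)" using ed i by auto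
      moreover have "xs ! Suc i \<noteq> x" using d i True nth_eq_iff_index_eq[OF d, of "Suc i" i] by auto
      moreover have "xs ! Suc i \<in> set xs" using True by simp
      ultimately show False using s nz by auto
    next
      case False
      then have ii: "i = length xs - 1" using i by simp
      have "xs \<noteq> []" using l by auto
      then have "last xs = x" using i ii by (simp add: last_conv_nth)
      moreover have "hd xs = xs ! 0" using \<open>xs \<noteq> []\<close> by (simp add: hd_conv_nth)
      moreover have "xs ! 0 \<noteq> x" using i ii l \<open>xs \<noteq> []\<close> nth_eq_iff_index_eq[OF d, of 0 i] by auto
      moreover have "xs ! 0 \<in> set xs" by (rule nth_mem) (use \<open>xs \<noteq> []\<close> in simp)
      ultimately show False using s nz el by auto
    qed
  qed
qed


theorem lemma3:
  fixes V :: "'a set" and E :: "'a \<Rightarrow> 'a \<Rightarrow> bool" and F :: "'a set"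
  assumes "simple_graph V E"
    and "connected_on E V"
    and "max_induced_forest V E F"
  shows "\<exists>A. A \<subseteq> V - F \<and> card A \<le> 2 * card F - 2 \<and> connected_on E (F \<union> A)"
proof -
  note g = assms(1) and cV = assms(2) and m = assms(3)
  have fin: "finite V" and EV: "\<And>u v. E u v \<Longrightarrow> u \<in> V \<and> v \<in> V"
    and sym: "\<And>u v. E u v \<Longrightarrow> E v u"
    using g unfolding simple_graph_def by auto
  have FV: "F \<subseteq> V" using m unfolding max_induced_forest_def induced_forest_def by auto
  have finF: "finite F" using FV fin finite_subset by blast
  define I where "I C \<longleftrightarrow> C \<subseteq> V \<and> connected_on E C \<and> C \<inter> F \<noteq> {}
      \<and> card (C - F) \<le> 2 * card (C \<inter> F) - 2" for C
  have step: "\<exists>C'. I C' \<and> card (F - C') < card (F - C)" if IC: "I C" and nF: "\<not> F \<subseteq> C" for C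
  proof -
    have CV: "C \<subseteq> V" and cC: "connected_on E C" and CF: "C \<inter> F \<noteq> {}"
      and cb: "card (C - F) \<le> 2 * card (C \<inter> F) - 2" using IC unfolding I_def by auto
    have finC: "finite C" using CV fin finite_subset by blast
    have k1: "card (C \<inter> F) \<ge> 1" using CF finC by (simp add: Suc_le_eq card_gt_0_iff)
    show ?thesis
    proof (cases "\<exists>c y. c \<in> C \<and> y \<notin> C \<and> E c y \<and> y \<in> F")
      case True
      then obtain c y where h: "c \<in> C" "y \<notin> C" "E c y" "y \<in> F" by blast
      let ?C' = "insert y C"
      have co: "connected_on E ?C'" using conn_insert[OF sym cC h(1) h(3)] .
      have e1: "?C' - F = C - F" using h by auto
      have e2: "?C' \<inter> F = insert y (C \<inter> F)" using h by auto
      have e3: "card (insert y (C \<inter> F)) = card (C \<inter> F) + 1" using h finC by simp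
      have ps: "F - ?C' \<subset> F - C" using h by auto
      have yV: "y \<in> V" using h EV by blast
      have "I ?C'" unfolding I_def
      proof (intro conjI)
        show "?C' \<subseteq> V" using CV yV by blast
        show "connected_on E ?C'" by (rule co)
        show "?C' \<inter> F \<noteq> {}" using e2 by blast
        show "card (?C' - F) \<le> 2 * card (?C' \<inter> F) - 2" unfolding e1 e2 e3 using cb k1 by arith
      qed
      moreover have "card (F - ?C') < card (F - C)" by (rule psubset_card_mono[OF _ ps]) (use finF in blast)
      ultimately show ?thesis by blast
    next
      case nc1: False
      show ?thesis
      proof (cases "\<exists>c y z. c \<in> C \<and> y \<notin> C \<and> E c y \<and> y \<notin> F \<and> z \<in> F \<and> z \<notin> C \<and> E y z")
        case True
        then obtain c y z where h: "c \<in> C" "y \<notin> C" "E c y" "y \<notin> F" "z \<in> F" "z \<notin> C" "E y z" by blast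
        let ?C' = "insert z (insert y C)"
        have co0: "connected_on E (insert y C)" using conn_insert[OF sym cC h(1) h(3)] .
        have yin: "y \<in> insert y C" by simp
        have co: "connected_on E ?C'" using conn_insert[OF sym co0 yin h(7)] .
        have e1: "?C' - F = insert y (C - F)" using h by auto
        have e2: "?C' \<inter> F = insert z (C \<inter> F)" using h by auto
        have e3: "card (insert z (C \<inter> F)) = card (C \<inter> F) + 1" using h finC by simp
        have e4: "card (insert y (C - F)) = card (C - F) + 1" using h finC by simp
        have ps: "F - ?C' \<subset> F - C" using h by auto
        have yV: "y \<in> V" "z \<in> V" using h EV by blast+
        have "I ?C'" unfolding I_def
        proof (intro conjI)
          show "?C' \<subseteq> V" using CV yV by blast
          show "connected_on E ?C'" by (rule co)
          show "?C' \<inter> F \<noteq> {}" using e2 by blast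
          show "card (?C' - F) \<le> 2 * card (?C' \<inter> F) - 2" unfolding e1 e2 e3 e4 using cb k1 by arith
        qed
        moreover have "card (F - ?C') < card (F - C)" by (rule psubset_card_mono[OF _ ps]) (use finF in blast)
        ultimately show ?thesis by blast
      next
        case nc2: False
        define N where "N = {y. y \<notin> C \<and> (\<exists>c\<in>C. E c y)}"
        obtain u where u: "u \<in> C" "u \<in> F" using CF by blast
        obtain b where b: "b \<in> F" "b \<notin> C" using nF by blast
        have bN: "b \<notin> C \<union> N" using b nc1 N_def by blast
        have "(u, b) \<in> (induced_edges E V)\<^sup>*" using cV u b CV FV unfolding connected_on_def by blast
        then obtain c1 w where cw: "c1 \<in> C \<union> N" "w \<notin> C \<union> N" "E c1 w" "w \<in> V"
          using leave_set[of u b E V "C \<union> N"] u bN by blast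
        have c1N: "c1 \<in> N" using cw N_def by auto
        then obtain c where c: "c \<in> C" "c1 \<notin> C" "E c c1" unfolding N_def by blast
        have c1F: "c1 \<notin> F" using c nc1 by blast
        have wF: "w \<notin> F" using c c1F cw nc2 by blast
        obtain z where z: "z \<in> F" "E w z" using has_nbr[OF g m cw(4) wF] by blast
        have zC: "z \<notin> C"
        proof
          assume "z \<in> C"
          then have "w \<in> N" using cw z sym unfolding N_def by blast
          then show False using cw by blast
        qed
        have wC: "w \<notin> C" "w \<noteq> c1" using cw c1N by auto
        let ?C' = "insert z (insert w (insert c1 C))"
        have co0: "connected_on E (insert c1 C)" using conn_insert[OF sym cC c(1) c(3)] .
        have c1in: "c1 \<in> insert c1 C" by simp
        have co1: "connected_on E (insert w (insert c1 C))" using conn_insert[OF sym co0 c1in cw(3)] .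
        have win: "w \<in> insert w (insert c1 C)" by simp
        have co: "connected_on E ?C'" using conn_insert[OF sym co1 win z(2)] .
        have e1: "?C' - F = insert w (insert c1 (C - F))" using z c1F wF by auto
        have e2: "?C' \<inter> F = insert z (C \<inter> F)" using z c1F wF by auto
        have e3: "card (insert z (C \<inter> F)) = card (C \<inter> F) + 1" using zC finC by simp
        have e4: "card (insert w (insert c1 (C - F))) = card (C - F) + 2" using wC c finC by simp
        have ps: "F - ?C' \<subset> F - C" using z zC by auto
        have yV: "c1 \<in> V" "z \<in> V" using c z EV by blast+
        have "I ?C'" unfolding I_def
        proof (intro conjI)
          show "?C' \<subseteq> V" using CV yV cw(4) by blast
          show "connected_on E ?C'" by (rule co)
          show "?C' \<inter> F \<noteq> {}" using e2 by blast
          show "card (?C' - F) \<le> 2 * card (?C' \<inter> F) - 2" unfolding e1 e2 e3 e4 using cb k1 by arith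
        qed
        moreover have "card (F - ?C') < card (F - C)" by (rule psubset_card_mono[OF _ ps]) (use finF in blast)
        ultimately show ?thesis by blast
      qed
    qed
  qed
  have main: "\<exists>D. I D \<and> F \<subseteq> D" if "I C" for C
    using that
  proof (induction "card (F - C)" arbitrary: C rule: less_induct)
    case less
    show ?case
    proof (cases "F \<subseteq> C")
      case True then show ?thesis using less.prems by blast
    next
      case False
      then obtain C' where "I C'" "card (F - C') < card (F - C)" using step less.prems by blast
      then show ?thesis using less.hyps by blast
    qed
  qed
  obtain v where v: "v \<in> V" using cV unfolding connected_on_def by blast
  have "induced_forest V E {v}" unfolding induced_forest_def using v no_cycle_small[of "{v}"] by simp
  then have "card F \<ge> 1" using m unfolding max_induced_forest_def by fastforce
  then obtain f where f: "f \<in> F" using finF by fastforce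
  have "connected_on E {f}" unfolding connected_on_def by simp
  then have "I {f}" using f FV unfolding I_def by auto
  then obtain D where D: "I D" "F \<subseteq> D" using main by blast
  have "D - F \<subseteq> V - F" "connected_on E (F \<union> (D - F))" "D \<inter> F = F" using D unfolding I_def
    by (auto simp: Un_absorb1 Un_Diff_cancel)
  moreover have "card (D - F) \<le> 2 * card F - 2" using D \<open>D \<inter> F = F\<close> unfolding I_def by simp
  ultimately show ?thesis by blast
qed

end
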